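(* For every $n\ge1$, almost surely, $\mathbf W^{2n,\uparrow}$ and $\mathbf W^{2n,\downarrow}$ each contain a unique bi-infinite path.
   Context: For $n\ge1$, $\mathsf{Cyl}^\uparrow_{2n}=\{(x,t):x\in\mathbb Z/2n\mathbb Z,t\in\mathbb Z,x-t\equiv0\ (\mathrm{mod}\ 2)\}$, $\mathsf{Cyl}^\downarrow_{2n}=\{(x,t):x-t\equiv1\ (\mathrm{mod}\ 2)\}$. Let $(\xi(w))_{w\in\mathsf{Cyl}^\uparrow_{2n}}$ be i.i.d. with $\mathbb P(\xi=1)=\mathbb P(\xi=-1)=1/2$. The cylindric lattice web $\mathbf W^{2n,\uparrow}$ consists of the walks $\mathbf W^{2n,\uparrow}_{(x,t)}(t)=x$, $\mathbf W^{2n,\uparrow}_{(x,t)}(s)=\mathbf W^{2n,\uparrow}_{(x,t)}(s-1)+\xi(\mathbf W^{2n,\uparrow}_{(x,t)}(s-1),s-1)\bmod 2n$ for integers $s>t$, $(x,t)\in\mathsf{Cyl}^\uparrow_{2n}$; equivalently its edge set is $\{(w,w+(\xi(w),1)):w\in\mathsf{Cyl}^\uparrow_{2n}\}$. Its dual $\mathbf W^{2n,\downarrow}$ consists of the walks $\mathbf W^{2n,\downarrow}_{(x,t)}(t)=x$, $\mathbf W^{2n,\downarrow}_{(x,t)}(s)=\mathbf W^{2n,\downarrow}_{(x,t)}(s+1)-\xi(\mathbf W^{2n,\downarrow}_{(x,t)}(s+1),s)\bmod 2n$ for integers $s<t$, $(x,t)\in\mathsf{Cyl}^\downarrow_{2n}$.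 For $D\in\{\uparrow,\downarrow\}$, a bi-infinite path of $\mathsf{Cyl}^D_{2n}$ is a sequence $(x_i,i)_{i\in\mathbb Z}\subset\mathsf{Cyl}^D_{2n}$ with $x_i-x_{i-1}\bmod 2n\in\{1,2n-1\}$ for all $i$; $\mathbf W^{2n,D}$ contains it if all its edges are edges of $\mathbf W^{2n,D}$. *)

theory Defs
  imports "HOL-Probability.Probability"
begin

text \<open>Points of the cylinder Z/2nZ x Z are encoded as pairs (x,t) of integers with
  0 <= x < 2n (canonical representatives of Z/2nZ).\<close>

definition cyl_up :: "nat \<Rightarrow> (int \<times> int) set" where
  "cyl_up n = {(x, t). 0 \<le> x \<and> x < 2 * int n \<and> even (x - t)}"

definition cyl_down :: "nat \<Rightarrow> (int \<times> int) set" where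
  "cyl_down n = {(x, t). 0 \<le> x \<and> x < 2 * int n \<and> odd (x - t)}"

definition xi_space :: "nat \<Rightarrow> ((int \<times> int) \<Rightarrow> int) measure" where
  "xi_space n = PiM (cyl_up n) (\<lambda>_. measure_pmf (pmf_of_set {-1, 1 :: int}))"

definition web_up_edges :: "nat \<Rightarrow> ((int \<times> int) \<Rightarrow> int) \<Rightarrow> ((int \<times> int) \<times> (int \<times> int)) set" where
  "web_up_edges n \<xi> =
     {((x, t), ((x + \<xi> (x, t)) mod (2 * int n), t + 1)) | x t. (x, t) \<in> cyl_up n}"

definition web_down_edges :: "nat \<Rightarrow> ((int \<times> int) \<Rightarrow> int) \<Rightarrow> ((int \<times> int) \<times> (int \<times> int)) set" where
  "web_down_edges n \<xi> =
     {((x, t), ((x - \<xi> (x, t - 1)) mod (2 * int n), t - 1)) | x t. (x, t) \<in> cyl_down n}"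

definition bi_infinite_path :: "nat \<Rightarrow> (int \<times> int) set \<Rightarrow> (int \<Rightarrow> int) \<Rightarrow> bool" where
  "bi_infinite_path n C p \<longleftrightarrow>
     (\<forall>i. (p i, i) \<in> C) \<and>
     (\<forall>i. (p i - p (i - 1)) mod (2 * int n) \<in> {1, 2 * int n - 1})"

definition up_web_contains :: "nat \<Rightarrow> ((int \<times> int) \<Rightarrow> int) \<Rightarrow> (int \<Rightarrow> int) \<Rightarrow> bool" where
  "up_web_contains n \<xi> p \<longleftrightarrow>
     bi_infinite_path n (cyl_up n) p \<and>
     (\<forall>i. ((p (i - 1), i - 1), (p i, i)) \<in> web_up_edges n \<xi>)"

definition down_web_contains :: "nat \<Rightarrow> ((int \<times> int) \<Rightarrow> int) \<Rightarrow> (int \<Rightarrow> int) \<Rightarrow> bool" where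
  "down_web_contains n \<xi> p \<longleftrightarrow>
     bi_infinite_path n (cyl_down n) p \<and>
     (\<forall>i. ((p i, i), (p (i - 1), i - 1)) \<in> web_down_edges n \<xi>)"

end

theory Submission
  imports Defs
begin

fun fl :: "(int \<Rightarrow> int \<Rightarrow> int) \<Rightarrow> int \<Rightarrow> nat \<Rightarrow> int \<Rightarrow> int" where
  "fl g s 0 x = x"
| "fl g s (Suc k) x = g (s + int k) (fl g s k x)"

lemma fl_add: "fl g s (a + b) x = fl g (s + int a) b (fl g s a x)"
  by (induction b) (auto simp: algebra_simps)

lemma fl_V:
  assumes inv: "\<And>t x. x \<in> V t \<Longrightarrow> g t x \<in> V (t+1)" and x: "x \<in> V s"
  shows "fl g s k x \<in> V (s + int k)"
proof (induction k)
  case 0 then show ?case using x by simp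
next
  case (Suc k)
  have "g (s + int k) (fl g s k x) \<in> V (s + int k + 1)" using inv Suc by blast
  then show ?case by (simp add: ac_simps)
qed

lemma path_fl:
  assumes "\<And>t. p (t+1) = g t (p t)"
  shows "p (s + int k) = fl g s k (p s)"
proof (induction k)
  case 0 then show ?case by simp
next
  case (Suc k)
  have "p (s + int (Suc k)) = p (s + int k + 1)" by (simp add: ac_simps)
  also have "\<dots> = g (s + int k) (p (s + int k))" by (rule assms)
  finally show ?case using Suc by simp
qed

definition good :: "(int \<Rightarrow> int \<Rightarrow> int) \<Rightarrow> (int \<Rightarrow> int set) \<Rightarrow> int \<Rightarrow> nat \<Rightarrow> bool" where
  "good g V s k \<longleftrightarrow> (\<forall>x\<in>V s. \<forall>y\<in>V s. fl g s k x = fl g s k y)"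

lemma good_key:
  assumes inv: "\<And>t x. x \<in> V t \<Longrightarrow> g t x \<in> V (t+1)"
    and gd: "good g V s k" and st: "s + int k \<le> t" and ss: "s' \<le> s"
    and x: "x \<in> V s'" and y: "y \<in> V s"
  shows "fl g s' (nat (t - s')) x = fl g s (nat (t - s)) y"
proof -
  have A: "\<And>z. z \<in> V s \<Longrightarrow> fl g s (nat (t - s)) z = fl g s (nat (t - s)) y"
  proof -
    fix z assume z: "z \<in> V s"
    have e: "nat (t - s) = k + nat (t - s - int k)" using st by simp
    have "fl g s (nat (t - s)) z = fl g (s + int k) (nat (t - s - int k)) (fl g s k z)"
      by (subst e) (rule fl_add)
    also have "fl g s k z = fl g s k y" using gd z y unfolding good_def by blast
    also have "fl g (s + int k) (nat (t - s - int k)) (fl g s k y) = fl g s (nat (t - s)) y"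
      by (subst e) (rule fl_add[symmetric])
    finally show "fl g s (nat (t - s)) z = fl g s (nat (t - s)) y" .
  qed
  have e2: "nat (t - s') = nat (s - s') + nat (t - s)" using st ss by simp
  have "fl g s' (nat (t - s')) x = fl g (s' + int (nat (s - s'))) (nat (t - s)) (fl g s' (nat (s - s')) x)"
    by (subst e2) (rule fl_add)
  also have "s' + int (nat (s - s')) = s" using ss by simp
  finally have "fl g s' (nat (t - s')) x = fl g s (nat (t - s)) (fl g s' (nat (s - s')) x)" .
  moreover have "fl g s' (nat (s - s')) x \<in> V s"
    using fl_V[of V g, OF inv x, of "nat (s - s')"] ss by simp
  ultimately show ?thesis using A by simp
qed

lemma generic_exists:
  assumes inv: "\<And>t x. x \<in> V t \<Longrightarrow> g t x \<in> V (t+1)"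
    and ne: "\<And>t. V t \<noteq> {}"
    and H: "\<And>t. \<exists>s k. s + int k \<le> t \<and> good g V s k"
  shows "\<exists>p. (\<forall>t. p t \<in> V t) \<and> (\<forall>t. p (t+1) = g t (p t))"
proof -
  define S where "S t = (SOME s. \<exists>k. s + int k \<le> t \<and> good g V s k)" for t
  define K where "K t = (SOME k. S t + int k \<le> t \<and> good g V (S t) k)" for t
  have SK: "S t + int (K t) \<le> t \<and> good g V (S t) (K t)" for t
  proof -
    have "\<exists>k. S t + int k \<le> t \<and> good g V (S t) k"
      unfolding S_def by (rule someI_ex) (rule H)
    then show ?thesis unfolding K_def by (rule someI_ex)
  qed
  define pt where "pt t = (SOME x. x \<in> V t)" for t
  have pt: "pt t \<in> V t" for t unfolding pt_def using ne[of t] by (simp add: some_in_eq)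
  define p where "p t = fl g (S t) (nat (t - S t)) (pt (S t))" for t
  have pval: "p t = fl g m (nat (t - m)) x" if "m \<le> S t" "x \<in> V m" for t m x
    unfolding p_def using good_key[OF inv SK[THEN conjunct2] SK[THEN conjunct1] that pt] by simp
  have "(\<forall>t. p t \<in> V t) \<and> (\<forall>t. p (t+1) = g t (p t))"
  proof safe
    fix t
    have "p t \<in> V (S t + int (nat (t - S t)))"
      unfolding p_def by (rule fl_V[of V g, OF inv pt])
    moreover have "S t + int (nat (t - S t)) = t" using SK[of t] by simp
    ultimately show "p t \<in> V t" by simp
  next
    fix t
    define m where "m = min (S t) (S (t+1))"
    obtain x where x: "x \<in> V m" using ne[of m] by blast
    have m1: "m \<le> S t" "m \<le> S (t+1)" unfolding m_def by auto
    have mt: "m \<le> t" using m1 SK[of t] by simp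
    have "p (t+1) = fl g m (nat (t + 1 - m)) x" using pval[OF m1(2) x] .
    also have "nat (t + 1 - m) = Suc (nat (t - m))" using mt by simp
    also have "fl g m (Suc (nat (t - m))) x = g (m + int (nat (t - m))) (fl g m (nat (t - m)) x)" by simp
    also have "m + int (nat (t - m)) = t" using mt by simp
    also have "fl g m (nat (t - m)) x = p t" using pval[OF m1(1) x] by simp
    finally show "p (t+1) = g t (p t)" .
  qed
  then show ?thesis by blast
qed

lemma generic_unique:
  assumes H: "\<And>t. \<exists>s k. s + int k \<le> t \<and> good g V s k"
    and P1: "\<forall>t. p t \<in> V t" and P2: "\<forall>t. p (t+1) = g t (p t)"
    and Q1: "\<forall>t. q t \<in> V t" and Q2: "\<forall>t. q (t+1) = g t (q t)"
  shows "q = p"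
  proof (rule ext)
    fix t
    obtain s k where sk: "s + int k \<le> t" "good g V s k" using H by blast
    have pp: "p (s + int k + int j) = fl g (s + int k) j (p (s + int k))" for j
      using path_fl[of p g] P2 by blast
    have qq: "q (s + int k + int j) = fl g (s + int k) j (q (s + int k))" for j
      using path_fl[of q g] Q2 by blast
    have "p (s + int k) = fl g s k (p s)" using path_fl[of p g] P2 by blast
    also have "\<dots> = fl g s k (q s)" using sk(2) P1 Q1 unfolding good_def by blast
    also have "\<dots> = q (s + int k)" using path_fl[of q g] Q2 by simp
    finally have eq: "p (s + int k) = q (s + int k)" .
    have "t = s + int k + int (nat (t - s - int k))" using sk by simp
    then show "q t = p t" using pp qq eq by metis
  qed


lemma generic_unique_exists:
  assumes inv: "\<And>t x. x \<in> V t \<Longrightarrow> g t x \<in> V (t+1)"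
    and ne: "\<And>t. V t \<noteq> {}"
    and H: "\<And>t. \<exists>s k. s + int k \<le> t \<and> good g V s k"
  shows "\<exists>!p. (\<forall>t. p t \<in> V t) \<and> (\<forall>t. p (t+1) = g t (p t))"
  using generic_exists[OF inv ne H] generic_unique[OF H] by metis

definition ee :: "nat \<Rightarrow> int \<Rightarrow> int" where
  "ee n x = (if 1 \<le> x \<and> x \<le> int n then -1 else 1)"

definition dd :: "nat \<Rightarrow> int \<Rightarrow> int" where
  "dd n z = (if z \<le> int n then z else 2 * int n - z)"

definition VV :: "nat \<Rightarrow> int \<Rightarrow> int \<Rightarrow> int set" where
  "VV n b t = {x. 0 \<le> x \<and> x < 2 * int n \<and> even (x - t - b)}"

lemma step_props:
  fixes n :: nat and z :: int
  assumes n: "n \<ge> 1" and z: "0 \<le> z" "z < 2 * int n"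
  defines "z' \<equiv> (z + ee n z) mod (2 * int n)"
  shows "0 \<le> z'" "z' < 2 * int n" "dd n z' \<le> max (dd n z - 1) 1"
    "dd n z \<le> 1 \<Longrightarrow> z' = 0 \<or> z' = 1" "even (z' - z - 1)"
proof -
  have N: "2 * int n \<ge> 2" using n by simp
  show "0 \<le> z'" "z' < 2 * int n" unfolding z'_def using N by auto
  have cases: "(z = 0 \<and> z' = 1) \<or> (1 \<le> z \<and> z \<le> int n \<and> z' = z - 1) \<or>
        (int n < z \<and> z < 2 * int n - 1 \<and> z' = z + 1) \<or> (z = 2 * int n - 1 \<and> int n < z \<and> z' = 0)"
  proof -
    consider "z = 0" | "1 \<le> z \<and> z \<le> int n" | "int n < z \<and> z < 2 * int n - 1" | "z = 2 * int n - 1 \<and> int n < z"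
      using z n by linarith
    then show ?thesis
    proof cases
      case 1 then show ?thesis unfolding z'_def ee_def using N by simp
    next
      case 2 then show ?thesis unfolding z'_def ee_def using z by (simp add: mod_pos_pos_trivial)
    next
      case 3 then show ?thesis unfolding z'_def ee_def using z by (simp add: mod_pos_pos_trivial)
    next
      case 4 then show ?thesis unfolding z'_def ee_def by simp
    qed
  qed
  show "dd n z' \<le> max (dd n z - 1) 1" using cases unfolding dd_def by auto
  show "dd n z \<le> 1 \<Longrightarrow> z' = 0 \<or> z' = 1" using cases unfolding dd_def by auto
  show "even (z' - z - 1)" using cases by auto
qed

lemma collapse:
  fixes n :: nat and b s :: int and g :: "int \<Rightarrow> int \<Rightarrow> int"
  assumes n: "n \<ge> 1"
    and pat: "\<And>k x. k \<le> n \<Longrightarrow> x \<in> VV n b (s + int k) \<Longrightarrow> g (s + int k) x = (x + ee n x) mod (2 * int n)"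
  shows "good g (VV n b) s (Suc n)"
proof -
  have inv: "fl g s k x \<in> VV n b (s + int k) \<and> dd n (fl g s k x) \<le> max (int n - int k) 1"
    if "k \<le> Suc n" "x \<in> VV n b s" for k x
    using that(1)
  proof (induction k)
    case 0
    then show ?case using that(2) unfolding VV_def dd_def by auto
  next
    case (Suc k)
    let ?z = "fl g s k x"
    have IH: "?z \<in> VV n b (s + int k)" "dd n ?z \<le> max (int n - int k) 1" using Suc by auto
    have kn: "k \<le> n" using Suc by simp
    have gz: "fl g s (Suc k) x = (?z + ee n ?z) mod (2 * int n)" using pat[OF kn IH(1)] by simp
    have zr: "0 \<le> ?z" "?z < 2 * int n" "even (?z - (s + int k) - b)" using IH(1) unfolding VV_def by auto
    note sp = step_props[OF n zr(1,2)]
    have "fl g s (Suc k) x \<in> VV n b (s + int (Suc k))"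
    proof -
      have "even ((?z + ee n ?z) mod (2 * int n) - ?z - 1 + (?z - (s + int k) - b))"
        using sp(5) zr(3) by (simp only: even_add)
      then have "even ((?z + ee n ?z) mod (2 * int n) - (s + int (Suc k)) - b)"
        by (simp add: algebra_simps)
      then show ?thesis unfolding gz VV_def using sp(1,2) by simp
    qed
    moreover have "dd n (fl g s (Suc k) x) \<le> max (int n - int (Suc k)) 1"
      unfolding gz using sp(3) IH(2) by auto
    ultimately show ?case by blast
  qed
  show ?thesis unfolding good_def
  proof (intro ballI)
    fix x y assume x: "x \<in> VV n b s" and y: "y \<in> VV n b s"
    have fx: "fl g s n x \<in> VV n b (s + int n)" "dd n (fl g s n x) \<le> 1" using inv[OF _ x, of n] by auto
    have fy: "fl g s n y \<in> VV n b (s + int n)" "dd n (fl g s n y) \<le> 1" using inv[OF _ y, of n] by auto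
    have ex: "fl g s (Suc n) x = (fl g s n x + ee n (fl g s n x)) mod (2 * int n)" using pat[OF le_refl fx(1)] by simp
    have ey: "fl g s (Suc n) y = (fl g s n y + ee n (fl g s n y)) mod (2 * int n)" using pat[OF le_refl fy(1)] by simp
    have "fl g s (Suc n) x = 0 \<or> fl g s (Suc n) x = 1"
      unfolding ex using step_props(4)[OF n _ _ fx(2)] fx(1) unfolding VV_def by auto
    moreover have "fl g s (Suc n) y = 0 \<or> fl g s (Suc n) y = 1"
      unfolding ey using step_props(4)[OF n _ _ fy(2)] fy(1) unfolding VV_def by auto
    moreover have "fl g s (Suc n) x \<in> VV n b (s + int (Suc n))" "fl g s (Suc n) y \<in> VV n b (s + int (Suc n))"
      using inv[OF _ x, of "Suc n"] inv[OF _ y, of "Suc n"] by auto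
    ultimately show "fl g s (Suc n) x = fl g s (Suc n) y" unfolding VV_def by auto
  qed
qed

lemma AE_some_block:
  fixes B :: "nat \<Rightarrow> (int \<times> int) set" and c :: "nat \<Rightarrow> int \<times> int \<Rightarrow> int" and K :: nat
  assumes n: "n \<ge> 1" and BI: "\<And>j. B j \<subseteq> cyl_up n" and fin: "\<And>j. finite (B j)"
    and card: "\<And>j. card (B j) \<le> K"
    and disj: "disjoint_family B" and c: "\<And>j w. c j w \<in> {-1,1}"
  shows "AE \<xi> in xi_space n. \<exists>j. \<forall>w\<in>B j. \<xi> w = c j w"
proof -
  define Q where "Q = measure_pmf (pmf_of_set {-1, 1::int})"
  define I where "I = cyl_up n"
  define MM where "MM = PiM I (\<lambda>_. Q)"
  have M: "xi_space n = MM" unfolding xi_space_def Q_def I_def MM_def ..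
  interpret PP: product_prob_space "\<lambda>_. Q" I
    by (intro product_prob_spaceI) (simp add: Q_def measure_pmf.prob_space_axioms)
  have ps: "prob_space MM" unfolding MM_def by (rule PP.P.prob_space_axioms)
  have I0: "(0, 0) \<in> I" using n unfolding I_def cyl_up_def by simp
  have ind0: "prob_space.indep_vars MM (\<lambda>_. Q) (\<lambda>w \<xi>. \<xi> w) I"
  proof (subst prob_space.indep_vars_iff_distr_eq_PiM'[OF ps])
    show "I \<noteq> {}" using I0 by blast
    show "\<And>i. i \<in> I \<Longrightarrow> (\<lambda>\<xi>. \<xi> i) \<in> measurable MM Q"
      unfolding MM_def by (rule measurable_component_singleton)
    have "distr MM (PiM I (\<lambda>_. Q)) (\<lambda>x. \<lambda>i\<in>I. x i) = distr MM MM (\<lambda>x. x)"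
      by (rule distr_cong) (auto simp: MM_def space_PiM)
    also have "\<dots> = MM" by simp
    also have "MM = PiM I (\<lambda>i. distr MM Q (\<lambda>x. x i))"
      unfolding MM_def by (rule PiM_cong) (auto simp: PP.PiM_component)
    finally show "distr MM (PiM I (\<lambda>_. Q)) (\<lambda>x. \<lambda>i\<in>I. x i) = PiM I (\<lambda>i. distr MM Q (\<lambda>x. x i))" .
  qed
  have ind: "prob_space.indep_vars MM (\<lambda>j. PiM (B j) (\<lambda>_. Q)) (\<lambda>j \<xi>. restrict (\<lambda>i. \<xi> i) (B j)) UNIV"
    by (rule prob_space.indep_vars_restrict[OF ps ind0]) (use BI disj in \<open>auto simp: I_def\<close>)
  define E where "E j = prod_emb I (\<lambda>_. Q) (B j) (PiE (B j) (\<lambda>w. {c j w}))" for j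
  define A where "A j = space (PiM (B j) (\<lambda>_. Q)) - PiE (B j) (\<lambda>w. {c j w})" for j
  have Esets: "E j \<in> sets MM" for j
    unfolding E_def MM_def using BI fin by (intro sets_PiM_I) (auto simp: I_def Q_def)
  have Asets: "A j \<in> sets (PiM (B j) (\<lambda>_. Q))" for j
    unfolding A_def using fin by (intro sets.compl_sets sets_PiM_I_finite) (auto simp: Q_def)
  have pre: "(\<lambda>\<xi>. restrict (\<lambda>i. \<xi> i) (B j)) -` A j \<inter> space MM = space MM - E j" for j
    unfolding A_def E_def prod_emb_def MM_def by (auto simp: space_PiM Q_def)
  have mE: "measure MM (E j) = (1/2) ^ card (B j)" for j
  proof -
    have "measure MM (E j) = (\<Prod>w\<in>B j. measure Q {c j w})"
      unfolding E_def MM_def using BI fin by (intro PP.measure_PiM_emb) (auto simp: I_def Q_def)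
    also have "\<dots> = (\<Prod>w\<in>B j. 1/2)"
      using c by (intro prod.cong) (auto simp: Q_def measure_pmf_single)
    finally show ?thesis by simp
  qed
  define T where "T = (\<Inter>j. space MM - E j)"
  have Tsets: "T \<in> sets MM" unfolding T_def using Esets by auto
  define r :: real where "r = 1 - (1/2) ^ K"
  have r: "0 \<le> r" "r < 1" unfolding r_def by (auto simp: power_le_one)
  have bound: "measure MM T \<le> r ^ k" if k: "k \<ge> 1" for k
  proof -
    have ne: "{..<k} \<noteq> {}" using k by (metis lessThan_iff empty_iff less_le_trans zero_less_one)
    have "T \<subseteq> (\<Inter>j\<in>{..<k}. (\<lambda>\<xi>. restrict (\<lambda>i. \<xi> i) (B j)) -` A j \<inter> space MM)"
      unfolding T_def pre by auto
    moreover have "(\<Inter>j\<in>{..<k}. (\<lambda>\<xi>. restrict (\<lambda>i. \<xi> i) (B j)) -` A j \<inter> space MM) \<in> sets MM"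
      unfolding pre using k Esets by (intro sets.finite_INT) (use ne in auto)
    ultimately have "measure MM T \<le> measure MM (\<Inter>j\<in>{..<k}. (\<lambda>\<xi>. restrict (\<lambda>i. \<xi> i) (B j)) -` A j \<inter> space MM)"
      by (intro finite_measure.finite_measure_mono[OF prob_space.finite_measure[OF ps]])
    also have "\<dots> = (\<Prod>j\<in>{..<k}. measure MM ((\<lambda>\<xi>. restrict (\<lambda>i. \<xi> i) (B j)) -` A j \<inter> space MM))"
      using ne by (intro prob_space.indep_varsD[OF ps ind]) (auto simp: Asets)
    also have "\<dots> = (\<Prod>j\<in>{..<k}. 1 - (1/2) ^ card (B j))"
      by (intro prod.cong refl) (simp add: pre prob_space.prob_compl[OF ps Esets] mE)
    also have "\<dots> \<le> (\<Prod>j\<in>{..<k}. r)"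
    proof (intro prod_mono conjI)
      fix j
      show "0 \<le> 1 - (1/2::real) ^ card (B j)" by (simp add: power_le_one)
      have "(1/2::real) ^ K \<le> (1/2) ^ card (B j)" using card[of j] by (intro power_decreasing) auto
      then show "1 - (1/2::real) ^ card (B j) \<le> r" unfolding r_def by simp
    qed
    also have "\<dots> = r ^ k" by simp
    finally show ?thesis .
  qed
  have "measure MM T \<le> 0"
  proof (rule LIMSEQ_le_const)
    show "(\<lambda>k. r ^ k) \<longlonglongrightarrow> 0" using r by (intro LIMSEQ_power_zero) auto
    show "\<exists>N. \<forall>k\<ge>N. measure MM T \<le> r ^ k" using bound by blast
  qed
  then have "emeasure MM T = 0"
    using finite_measure.emeasure_eq_measure[OF prob_space.finite_measure[OF ps]] measure_nonneg[of MM T] by simp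
  then have null: "T \<in> null_sets MM" using Tsets by auto
  have "AE \<xi> in MM. \<exists>j. \<forall>w\<in>B j. \<xi> w = c j w"
  proof (rule AE_I'[OF null])
    show "{\<xi> \<in> space MM. \<not> (\<exists>j. \<forall>w\<in>B j. \<xi> w = c j w)} \<subseteq> T"
      unfolding T_def E_def prod_emb_def by (auto simp: Pi_iff) blast
  qed
  then show ?thesis unfolding M .
qed

lemma even_mod_step:
  fixes x e :: int
  assumes "e \<in> {-1, 1}"
  shows "even ((x + e) mod (2 * int n) - x - 1)"
proof -
  have "(x + e) mod (2 * int n) - x - 1 = (e - 1) - 2 * (int n * ((x + e) div (2 * int n)))"
    using minus_mod_eq_mult_div[of "x + e" "2 * int n"] by (simp add: algebra_simps)
  moreover have "even (e - 1)" using assms by auto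
  ultimately show ?thesis by simp
qed

lemma e_mod:
  fixes e :: int
  assumes "e \<in> {-1, 1}" "n \<ge> 1"
  shows "e mod (2 * int n) \<in> {1, 2 * int n - 1}"
proof -
  have N: "2 * int n \<ge> 2" using assms by simp
  show ?thesis
  proof (cases "e = 1")
    case True then show ?thesis using N by simp
  next
    case False
    then have "e = -1" using assms by auto
    moreover have "(-1::int) mod (2 * int n) = 2 * int n - 1"
      using N by (simp add: zmod_minus1)
    ultimately show ?thesis by simp
  qed
qed

lemma VV_ne: "n \<ge> 1 \<Longrightarrow> VV n b t \<noteq> {}"
  unfolding VV_def
  by (rule ccontr) (cases "even (t + b)"; auto dest!: spec[of _ "if even (t + b) then 0 else 1"] split: if_splits)

lemma par_a: "odd ((x::int) - - t) \<longleftrightarrow> even (x - t - 1)"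
proof -
  have "x - t - 1 = (x - - t) - 1 - 2 * t" by simp
  then show ?thesis by simp
qed

lemma par_b: "odd ((x::int) - t) \<longleftrightarrow> even (x - (t - 1))"
proof -
  have "x - (t - 1) = (x - t) + 1" by simp
  then show ?thesis by simp
qed

definition gup :: "nat \<Rightarrow> (int \<times> int \<Rightarrow> int) \<Rightarrow> int \<Rightarrow> int \<Rightarrow> int" where
  "gup n \<xi> t x = (x + \<xi> (x, t)) mod (2 * int n)"

definition gdn :: "nat \<Rightarrow> (int \<times> int \<Rightarrow> int) \<Rightarrow> int \<Rightarrow> int \<Rightarrow> int" where
  "gdn n \<xi> t x = (x - \<xi> (x, - t - 1)) mod (2 * int n)"

lemma up_iff:
  assumes n: "n \<ge> 1" and pm: "\<forall>w\<in>cyl_up n. \<xi> w \<in> {-1, 1}"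
  shows "up_web_contains n \<xi> p \<longleftrightarrow> (\<forall>t. p t \<in> VV n 0 t) \<and> (\<forall>t. p (t+1) = gup n \<xi> t (p t))"
proof
  assume H: "up_web_contains n \<xi> p"
  have "\<forall>i. (p i, i) \<in> cyl_up n"
    using H unfolding up_web_contains_def bi_infinite_path_def by blast
  then have mem: "\<forall>t. p t \<in> VV n 0 t"
    unfolding cyl_up_def VV_def by simp
  have "p (t+1) = gup n \<xi> t (p t)" for t
  proof -
    have "((p t, t), (p (t+1), t+1)) \<in> web_up_edges n \<xi>"
    proof -
      have "((p (t + 1 - 1), t + 1 - 1), (p (t+1), t+1)) \<in> web_up_edges n \<xi>"
        using H unfolding up_web_contains_def by blast
      then show ?thesis by simp
    qed
    then obtain x t' where h: "p t = x" "t = t'" "p (t+1) = (x + \<xi> (x, t')) mod (2 * int n)"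
      unfolding web_up_edges_def by blast
    show ?thesis unfolding gup_def using h by simp
  qed
  then show "(\<forall>t. p t \<in> VV n 0 t) \<and> (\<forall>t. p (t+1) = gup n \<xi> t (p t))" using mem by blast
next
  assume H: "(\<forall>t. p t \<in> VV n 0 t) \<and> (\<forall>t. p (t+1) = gup n \<xi> t (p t))"
  have cyl: "(p i, i) \<in> cyl_up n" for i using H[THEN conjunct1, rule_format, of i] unfolding VV_def cyl_up_def by simp
  have st: "p i = (p (i-1) + \<xi> (p (i-1), i-1)) mod (2 * int n)" for i
    using H[THEN conjunct2, rule_format, of "i-1"] unfolding gup_def by simp
  have "(p i - p (i - 1)) mod (2 * int n) \<in> {1, 2 * int n - 1}" for i
  proof -
    have "(p i - p (i - 1)) mod (2 * int n) = \<xi> (p (i-1), i-1) mod (2 * int n)"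
      by (subst st[of i]) (simp add: mod_diff_left_eq)
    then show ?thesis using e_mod[OF pm[rule_format, OF cyl[of "i-1"]] n] by simp
  qed
  moreover have "((p (i - 1), i - 1), (p i, i)) \<in> web_up_edges n \<xi>" for i
    unfolding web_up_edges_def
    by (rule CollectI, rule exI[of _ "p (i-1)"], rule exI[of _ "i-1"]) (use cyl[of "i-1"] st[of i] in simp)
  ultimately show "up_web_contains n \<xi> p"
    unfolding up_web_contains_def bi_infinite_path_def using cyl by blast
qed

lemma down_iff:
  assumes n: "n \<ge> 1" and pm: "\<forall>w\<in>cyl_up n. \<xi> w \<in> {-1, 1}"
  shows "down_web_contains n \<xi> p \<longleftrightarrow>
    (\<forall>t. p (-t) \<in> VV n 1 t) \<and> (\<forall>t. p (-(t+1)) = gdn n \<xi> t (p (-t)))"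
proof
  assume H: "down_web_contains n \<xi> p"
  have mem: "\<forall>t. p (-t) \<in> VV n 1 t"
  proof
    fix t
    have "(p (-t), -t) \<in> cyl_down n" using H unfolding down_web_contains_def bi_infinite_path_def by blast
    then show "p (-t) \<in> VV n 1 t" unfolding cyl_down_def VV_def using par_a[of "p (-t)" t] by simp
  qed
  have "p (-(t+1)) = gdn n \<xi> t (p (-t))" for t
  proof -
    have "((p (-t), -t), (p (-t - 1), -t - 1)) \<in> web_down_edges n \<xi>"
      using H unfolding down_web_contains_def by blast
    then obtain x t' where h: "p (-t) = x" "-t = t'" "p (-t - 1) = (x - \<xi> (x, t' - 1)) mod (2 * int n)"
      unfolding web_down_edges_def by blast
    have "p (-(t+1)) = p (-t - 1)" by simp
    also have "\<dots> = (p (-t) - \<xi> (p (-t), -t - 1)) mod (2 * int n)" using h by simp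
    finally show ?thesis unfolding gdn_def by simp
  qed
  then show "(\<forall>t. p (-t) \<in> VV n 1 t) \<and> (\<forall>t. p (-(t+1)) = gdn n \<xi> t (p (-t)))" using mem by blast
next
  assume H: "(\<forall>t. p (-t) \<in> VV n 1 t) \<and> (\<forall>t. p (-(t+1)) = gdn n \<xi> t (p (-t)))"
  have cyl: "(p i, i) \<in> cyl_down n" for i
    using H[THEN conjunct1, rule_format, of "-i"] par_a[of "p i" "-i"] unfolding VV_def cyl_down_def by simp
  have cylu: "(p i, i - 1) \<in> cyl_up n" for i
    using cyl[of i] par_b[of "p i" i] unfolding cyl_down_def cyl_up_def by simp
  have st: "p (i-1) = (p i - \<xi> (p i, i-1)) mod (2 * int n)" for i
    using H[THEN conjunct2, rule_format, of "-i"] unfolding gdn_def by simp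
  have "(p i - p (i - 1)) mod (2 * int n) \<in> {1, 2 * int n - 1}" for i
  proof -
    have "(p i - p (i - 1)) mod (2 * int n) = \<xi> (p i, i-1) mod (2 * int n)"
      by (subst st[of i]) (simp add: mod_diff_right_eq)
    then show ?thesis using e_mod[OF pm[rule_format, OF cylu[of i]] n] by simp
  qed
  moreover have "((p i, i), (p (i - 1), i - 1)) \<in> web_down_edges n \<xi>" for i
    unfolding web_down_edges_def
    by (rule CollectI, rule exI[of _ "p i"], rule exI[of _ "i"]) (use cyl[of i] st[of i] in simp)
  ultimately show "down_web_contains n \<xi> p"
    unfolding down_web_contains_def bi_infinite_path_def using cyl by blast
qed

definition blk :: "nat \<Rightarrow> int \<Rightarrow> (int \<times> int) set" where
  "blk n a = {(x, r). (x, r) \<in> cyl_up n \<and> a \<le> r \<and> r \<le> a + int n}"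

lemma blk_sub: "blk n a \<subseteq> {0..<2 * int n} \<times> {a..a + int n}"
  unfolding blk_def cyl_up_def by auto

lemma blk_finite: "finite (blk n a)"
  by (rule finite_subset[OF blk_sub]) auto

lemma blk_card: "card (blk n a) \<le> nat (2 * int n) * nat (int n + 1)"
proof -
  have "card (blk n a) \<le> card ({0..<2 * int n} \<times> {a..a + int n})"
    by (rule card_mono[OF _ blk_sub]) auto
  also have "\<dots> = nat (2 * int n) * nat (int n + 1)"
    by (simp add: card_cartesian_product)
  finally show ?thesis .
qed

lemma blk_disj:
  assumes "\<And>j j'. j \<noteq> j' \<Longrightarrow> \<bar>a j - a j'\<bar> \<ge> int n + 1"
  shows "disjoint_family (\<lambda>j. blk n (a j))"
  unfolding disjoint_family_on_def
proof (intro ballI impI)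
  fix j j' :: 'a assume "j \<noteq> j'"
  then have d: "\<bar>a j - a j'\<bar> \<ge> int n + 1" by (rule assms)
  show "blk n (a j) \<inter> blk n (a j') = {}"
  proof (rule ccontr)
    assume "blk n (a j) \<inter> blk n (a j') \<noteq> {}"
    then obtain x r where "(x, r) \<in> blk n (a j)" "(x, r) \<in> blk n (a j')" by auto
    then have "a j \<le> r" "r \<le> a j + int n" "a j' \<le> r" "r \<le> a j' + int n"
      unfolding blk_def by auto
    then have "\<bar>a j - a j'\<bar> \<le> int n" by linarith
    then show False using d by linarith
  qed
qed

lemma spacing:
  fixes j j' :: nat
  assumes "j \<noteq> j'"
  shows "\<bar>int j * int (Suc n) - int j' * int (Suc n)\<bar> \<ge> int n + 1"
proof -
  have "\<bar>int j - int j'\<bar> \<ge> 1" using assms by auto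
  then have A: "1 * int (Suc n) \<le> \<bar>int j - int j'\<bar> * int (Suc n)"
    by (intro mult_right_mono) auto
  have "int j * int (Suc n) - int j' * int (Suc n) = (int j - int j') * int (Suc n)"
    by (simp add: algebra_simps)
  then have B: "\<bar>int j * int (Suc n) - int j' * int (Suc n)\<bar> = \<bar>int j - int j'\<bar> * int (Suc n)"
    by (simp add: abs_mult)
  show ?thesis by (metis A B add.commute mult_1 of_nat_Suc)
qed

lemma par_flip: "even ((x::int) - t - 1) \<longleftrightarrow> even (x - (- t - 1))"
proof -
  have "x - (- t - 1) = (x - t - 1) + 2 * (t + 1)" by simp
  then show ?thesis by simp
qed

lemma det_main:
  assumes n: "n \<ge> 1" and pm: "\<forall>w\<in>cyl_up n. \<xi> w \<in> {-1, 1}"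
    and pu: "\<forall>t. \<exists>j::nat. \<forall>w\<in>blk n (t - int (Suc j) * int (Suc n)). \<xi> w = ee n (fst w)"
    and pd: "\<forall>t. \<exists>j::nat. \<forall>w\<in>blk n (- t + int j * int (Suc n)). \<xi> w = - ee n (fst w)"
  shows "(\<exists>!p. up_web_contains n \<xi> p) \<and> (\<exists>!p. down_web_contains n \<xi> p)"
proof
  have pmx: "\<xi> (x, t) \<in> {-1, 1}" if "(x, t) \<in> cyl_up n" for x t using pm that by blast
  have "\<exists>!p. (\<forall>t. p t \<in> VV n 0 t) \<and> (\<forall>t. p (t+1) = gup n \<xi> t (p t))"
  proof (rule generic_unique_exists)
    show "gup n \<xi> t x \<in> VV n 0 (t + 1)" if "x \<in> VV n 0 t" for t x
    proof -
      have c: "(x, t) \<in> cyl_up n" using that unfolding VV_def cyl_up_def by auto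
      have "even ((x + \<xi> (x, t)) mod (2 * int n) - x - 1 + (x - t - 0))"
        using even_mod_step[OF pmx[OF c], of x n] that unfolding VV_def by (simp only: even_add) simp
      then show ?thesis unfolding gup_def VV_def using n by (simp add: algebra_simps)
    qed
    show "VV n 0 t \<noteq> {}" for t using VV_ne[OF n] .
    show "\<exists>s k. s + int k \<le> t \<and> good (gup n \<xi>) (VV n 0) s k" for t
    proof -
      obtain j :: nat where j: "\<forall>w\<in>blk n (t - int (Suc j) * int (Suc n)). \<xi> w = ee n (fst w)"
        using pu by blast
      define s where "s = t - int (Suc j) * int (Suc n)"
      have "good (gup n \<xi>) (VV n 0) s (Suc n)"
      proof (rule collapse[OF n])
        fix k x assume k: "k \<le> n" and x: "x \<in> VV n 0 (s + int k)"
        have "(x, s + int k) \<in> blk n s" using k x unfolding blk_def VV_def cyl_up_def by auto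
        then show "gup n \<xi> (s + int k) x = (x + ee n x) mod (2 * int n)"
          using j unfolding s_def gup_def by auto
      qed
      moreover have "s + int (Suc n) \<le> t" unfolding s_def by (simp add: algebra_simps)
      ultimately show ?thesis by blast
    qed
  qed
  then show "\<exists>!p. up_web_contains n \<xi> p" using up_iff[OF n pm] by simp
next
  have pmx: "\<xi> (x, t) \<in> {-1, 1}" if "(x, t) \<in> cyl_up n" for x t using pm that by blast
  have U: "\<exists>!q. (\<forall>t. q t \<in> VV n 1 t) \<and> (\<forall>t. q (t+1) = gdn n \<xi> t (q t))"
  proof (rule generic_unique_exists)
    show "gdn n \<xi> t x \<in> VV n 1 (t + 1)" if "x \<in> VV n 1 t" for t x
    proof -
      have c: "(x, - t - 1) \<in> cyl_up n" using that par_flip[of x t] unfolding VV_def cyl_up_def by auto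
      have m: "- \<xi> (x, - t - 1) \<in> {-1, 1}" using pmx[OF c] by auto
      have "even ((x + - \<xi> (x, - t - 1)) mod (2 * int n) - x - 1 + (x - t - 1))"
        using even_mod_step[OF m, of x n] that unfolding VV_def by (simp only: even_add) simp
      then show ?thesis unfolding gdn_def VV_def using n by (simp add: algebra_simps)
    qed
    show "VV n 1 t \<noteq> {}" for t using VV_ne[OF n] .
    show "\<exists>s k. s + int k \<le> t \<and> good (gdn n \<xi>) (VV n 1) s k" for t
    proof -
      obtain j :: nat where j: "\<forall>w\<in>blk n (- t + int j * int (Suc n)). \<xi> w = - ee n (fst w)"
        using pd by blast
      define s where "s = t - int (Suc j) * int (Suc n)"
      have a: "- t + int j * int (Suc n) = - s - int n - 1" unfolding s_def by (simp add: algebra_simps)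
      have "good (gdn n \<xi>) (VV n 1) s (Suc n)"
      proof (rule collapse[OF n])
        fix k x assume k: "k \<le> n" and x: "x \<in> VV n 1 (s + int k)"
        have "(x, - (s + int k) - 1) \<in> blk n (- s - int n - 1)"
          using k x par_flip[of x "s + int k"] unfolding blk_def VV_def cyl_up_def by auto
        then show "gdn n \<xi> (s + int k) x = (x + ee n x) mod (2 * int n)"
          using j unfolding a gdn_def by auto
      qed
      moreover have "s + int (Suc n) \<le> t" unfolding s_def by (simp add: algebra_simps)
      ultimately show ?thesis by blast
    qed
  qed
  let ?R = "\<lambda>q. (\<forall>t. q t \<in> VV n 1 t) \<and> (\<forall>t. q (t+1) = gdn n \<xi> t (q t))"
  have D: "down_web_contains n \<xi> p \<longleftrightarrow> ?R (\<lambda>t. p (-t))" for p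
    using down_iff[OF n pm, of p] by simp
  obtain q where q: "?R q" using U by blast
  have "down_web_contains n \<xi> (\<lambda>i. q (-i))" using q unfolding D by (simp add: add.commute)
  moreover have "p1 = p2" if "down_web_contains n \<xi> p1" "down_web_contains n \<xi> p2" for p1 p2
  proof
    fix i
    have r1: "?R (\<lambda>t. p1 (-t))" "?R (\<lambda>t. p2 (-t))" using D that by auto
    obtain q0 where q0: "\<forall>y. ?R y \<longrightarrow> y = q0" using U by (elim ex1E) blast
    have "(\<lambda>t. p1 (-t)) = (\<lambda>t. p2 (-t))" using q0 r1 by metis
    then have "(\<lambda>t. p1 (-t)) (-i) = (\<lambda>t. p2 (-t)) (-i)" by (rule fun_cong)
    then show "p1 i = p2 i" by simp
  qed
  ultimately show "\<exists>!p. down_web_contains n \<xi> p" by blast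
qed


theorem proposition3p2:
  fixes n :: nat
  assumes "n \<ge> 1"
  shows "AE \<xi> in xi_space n.
           (\<exists>!p. up_web_contains n \<xi> p) \<and> (\<exists>!p. down_web_contains n \<xi> p)"
proof -
  have pm: "AE \<xi> in xi_space n. \<forall>w\<in>cyl_up n. \<xi> w \<in> {-1, 1}"
  proof -
    have "AE \<xi> in xi_space n. \<forall>w. w \<in> cyl_up n \<longrightarrow> \<xi> w \<in> {-1, 1}"
    proof (subst AE_all_countable, intro allI)
      fix w :: "int \<times> int"
      show "AE \<xi> in xi_space n. w \<in> cyl_up n \<longrightarrow> \<xi> w \<in> {-1, 1}"
      proof (cases "w \<in> cyl_up n")
        case True
        have "AE x in measure_pmf (pmf_of_set {-1, 1::int}). x \<in> {-1, 1}"
          using AE_measure_pmf[of "pmf_of_set {-1, 1::int}"] by simp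
        then have "AE \<xi> in xi_space n. \<xi> w \<in> {-1, 1}" unfolding xi_space_def
          by (intro AE_PiM_component[OF _ True]) (simp_all add: measure_pmf.prob_space_axioms)
        then show ?thesis by simp
      next
        case False then show ?thesis by simp
      qed
    qed
    then show ?thesis unfolding Ball_def .
  qed
  have pu: "AE \<xi> in xi_space n. \<forall>t. \<exists>j::nat. \<forall>w\<in>blk n (t - int (Suc j) * int (Suc n)). \<xi> w = ee n (fst w)"
    unfolding AE_all_countable
  proof
    fix t :: int
    show "AE \<xi> in xi_space n. \<exists>j::nat. \<forall>w\<in>blk n (t - int (Suc j) * int (Suc n)). \<xi> w = ee n (fst w)"
    proof (rule AE_some_block[OF assms])
      show "\<And>j. blk n (t - int (Suc j) * int (Suc n)) \<subseteq> cyl_up n" unfolding blk_def by auto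
      show "\<And>j. finite (blk n (t - int (Suc j) * int (Suc n)))" by (rule blk_finite)
      show "\<And>j. card (blk n (t - int (Suc j) * int (Suc n))) \<le> nat (2 * int n) * nat (int n + 1)"
        by (rule blk_card)
      show "disjoint_family (\<lambda>j. blk n (t - int (Suc j) * int (Suc n)))"
      proof (rule blk_disj)
        fix j j' :: nat assume "j \<noteq> j'"
        then have "\<bar>int j' * int (Suc n) - int j * int (Suc n)\<bar> \<ge> int n + 1" by (intro spacing) auto
        moreover have "t - int (Suc j) * int (Suc n) - (t - int (Suc j') * int (Suc n)) =
            int j' * int (Suc n) - int j * int (Suc n)" by (simp add: algebra_simps)
        ultimately show "\<bar>t - int (Suc j) * int (Suc n) - (t - int (Suc j') * int (Suc n))\<bar> \<ge> int n + 1"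
          by simp
      qed
      show "\<And>j w. ee n (fst w) \<in> {-1, 1}" by (simp add: ee_def)
    qed
  qed
  have pd: "AE \<xi> in xi_space n. \<forall>t. \<exists>j::nat. \<forall>w\<in>blk n (- t + int j * int (Suc n)). \<xi> w = - ee n (fst w)"
    unfolding AE_all_countable
  proof
    fix t :: int
    show "AE \<xi> in xi_space n. \<exists>j::nat. \<forall>w\<in>blk n (- t + int j * int (Suc n)). \<xi> w = - ee n (fst w)"
    proof (rule AE_some_block[OF assms])
      show "\<And>j. blk n (- t + int j * int (Suc n)) \<subseteq> cyl_up n" unfolding blk_def by auto
      show "\<And>j. finite (blk n (- t + int j * int (Suc n)))" by (rule blk_finite)
      show "\<And>j. card (blk n (- t + int j * int (Suc n))) \<le> nat (2 * int n) * nat (int n + 1)"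
        by (rule blk_card)
      show "disjoint_family (\<lambda>j. blk n (- t + int j * int (Suc n)))"
      proof (rule blk_disj)
        fix j j' :: nat assume "j \<noteq> j'"
        then have "\<bar>int j * int (Suc n) - int j' * int (Suc n)\<bar> \<ge> int n + 1" by (intro spacing) auto
        moreover have "- t + int j * int (Suc n) - (- t + int j' * int (Suc n)) =
            int j * int (Suc n) - int j' * int (Suc n)" by (simp add: algebra_simps)
        ultimately show "\<bar>- t + int j * int (Suc n) - (- t + int j' * int (Suc n))\<bar> \<ge> int n + 1"
          by simp
      qed
      show "\<And>j w. - ee n (fst w) \<in> {-1, 1}" by (simp add: ee_def)
    qed
  qed
  from pm pu pd show ?thesis
  proof eventually_elim
    case (elim \<xi>)
    show ?case by (rule det_main[OF assms elim(1) elim(2) elim(3)])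
  qed
qed

end
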